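(* Let $A\in\mathbb{C}^{n\times n}$ and $m\in\mathbb{N}=\{1,2,\dots\}$. Then $AA^{\#_m}A=A$ if and only if $\mathrm{Ind}(A)\le 1$.
   Context: For $A\in\mathbb{C}^{n\times n}$: $A^\dagger$ Moore–Penrose inverse, $P_A=AA^\dagger$, $\mathcal{R}(\cdot)$ column space. The index $\mathrm{Ind}(A)$ is the smallest nonnegative integer $k$ with $\mathcal{R}(A^k)=\mathcal{R}(A^{k+1})$ ($A^0=I_n$). The core-EP inverse $A^{\mathrm{cEP}}$ is the unique $X$ with $XAX=X$ and $\mathcal{R}(X)=\mathcal{R}(X^* )=\mathcal{R}(A^k)$. For $m\in\mathbb{N}$, the $m$-weak group inverse is $A^{\mathrm{WG}_m}:=(A^{\mathrm{cEP}})^{m+1}A^m$ and the $m$-weak core inverse is $A^{\#_m}:=A^{\mathrm{WG}_m}P_{A^m}$. *)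

theory Defs
  imports "HOL-Analysis.Analysis"
begin

definition conj_transpose :: "complex^'n^'m \<Rightarrow> complex^'m^'n" where
  "conj_transpose A = (\<chi> i j. cnj (A $ j $ i))"

definition col_space :: "complex^'n^'m \<Rightarrow> (complex^'m) set" where
  "col_space A = range (\<lambda>x. A *v x)"

fun mat_pow :: "complex^'n^'n \<Rightarrow> nat \<Rightarrow> complex^'n^'n" where
  "mat_pow A 0 = mat 1"
| "mat_pow A (Suc k) = A ** mat_pow A k"

definition mp_inverse :: "complex^'n^'n \<Rightarrow> complex^'n^'n" where
  "mp_inverse A = (THE X. A ** X ** A = A \<and> X ** A ** X = X \<and>
      conj_transpose (A ** X) = A ** X \<and> conj_transpose (X ** A) = X ** A)"

definition mat_index :: "complex^'n^'n \<Rightarrow> nat" where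
  "mat_index A = (LEAST k. col_space (mat_pow A k) = col_space (mat_pow A (Suc k)))"

definition core_EP :: "complex^'n^'n \<Rightarrow> complex^'n^'n" where
  "core_EP A = (THE X. X ** A ** X = X \<and>
      col_space X = col_space (conj_transpose X) \<and>
      col_space (conj_transpose X) = col_space (mat_pow A (mat_index A)))"

definition weak_group_m :: "nat \<Rightarrow> complex^'n^'n \<Rightarrow> complex^'n^'n" where
  "weak_group_m m A = mat_pow (core_EP A) (m + 1) ** mat_pow A m"

definition weak_core_m :: "nat \<Rightarrow> complex^'n^'n \<Rightarrow> complex^'n^'n" where
  "weak_core_m m A = weak_group_m m A ** (mat_pow A m ** mp_inverse (mat_pow A m))"

end

theory Submission
  imports Defs
begin


abbreviation ct where "ct \<equiv> conj_transpose"

definition cdot :: "complex^'n \<Rightarrow> complex^'n \<Rightarrow> complex" where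
  "cdot x y = (\<Sum>i\<in>UNIV. x$i * cnj (y$i))"

lemma ct_ct[simp]: "ct (ct B) = B"
  by (simp add: conj_transpose_def vec_eq_iff)

lemma ct_mult: "ct (B ** C) = ct C ** ct B"
  by (simp add: conj_transpose_def matrix_matrix_mult_def vec_eq_iff mult.commute)

lemma cdot_mv: "cdot (B *v x) y = cdot x (ct B *v y)"
proof -
  have 1: "cdot (B *v x) y = (\<Sum>i\<in>UNIV. \<Sum>j\<in>UNIV. B$i$j * x$j * cnj (y$i))"
    by (simp add: cdot_def matrix_vector_mult_def sum_distrib_right)
  have 2: "cdot x (ct B *v y) = (\<Sum>j\<in>UNIV. \<Sum>i\<in>UNIV. B$i$j * x$j * cnj (y$i))"
    by (simp add: cdot_def matrix_vector_mult_def conj_transpose_def sum_distrib_left mult_ac)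
  show ?thesis unfolding 1 2 by (rule sum.swap)
qed

lemma cdot_self_eq0: "cdot x x = 0 \<Longrightarrow> x = 0"
proof -
  assume h: "cdot x x = 0"
  have e: "x$i * cnj (x$i) = of_real ((cmod (x$i))^2)" for i
    using complex_norm_square by (metis mult.commute)
  have "(\<Sum>i\<in>UNIV. (cmod (x$i))^2) = 0"
    using h unfolding cdot_def e by (metis of_real_eq_0_iff of_real_sum)
  then have "\<forall>i\<in>UNIV. (cmod (x$i))^2 = 0"
    by (subst (asm) sum_nonneg_eq_0_iff) auto
  then show "x = 0" by (simp add: vec_eq_iff)
qed

lemma cdot_add_l: "cdot (x + y) z = cdot x z + cdot y z"
  by (simp add: cdot_def distrib_right sum.distrib)
lemma cdot_diff_l: "cdot (x - y) z = cdot x z - cdot y z"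
  by (simp add: cdot_def left_diff_distrib sum_subtractf)
lemma cdot_scale_l: "cdot (c *s x) z = c * cdot x z"
  by (simp add: cdot_def sum_distrib_left mult_ac)
lemma cdot_zero_l[simp]: "cdot 0 z = 0"
  by (simp add: cdot_def)
lemma cdot_sum_l: "cdot (\<Sum>j\<in>A. f j) z = (\<Sum>j\<in>A. cdot (f j) z)"
  by (induction A rule: infinite_finite_induct) (auto simp: cdot_add_l)
lemma cdot_cnj: "cdot y x = cnj (cdot x y)"
  by (simp add: cdot_def mult.commute)
lemma cdot_scale_r: "cdot x (c *s z) = cnj c * cdot x z"
  by (simp add: cdot_def sum_distrib_left mult_ac)
lemma inner_cdot: "inner x y = Re (cdot x y)"
  by (simp add: cdot_def inner_vec_def inner_complex_def Re_sum)

lemma mv_scale: "B *v (c *s x) = c *s (B *v (x::complex^'n))"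
  by (simp add: matrix_vector_mult_def vec_eq_iff sum_distrib_left mult_ac)

lemma mv_sum: "B *v (\<Sum>j\<in>A. f j) = (\<Sum>j\<in>A. B *v (f j :: complex^'n))"
  by (induction A rule: infinite_finite_induct) (auto simp: matrix_vector_right_distrib)

definition mkm :: "('n \<Rightarrow> complex^'m) \<Rightarrow> complex^'n^'m" where
  "mkm g = (\<chi> i j. g j $ i)"

lemma mkm_mv: "mkm g *v x = (\<Sum>j\<in>UNIV. x$j *s g j)"
  by (simp add: mkm_def matrix_vector_mult_def vec_eq_iff sum_component mult.commute)

lemma vec_decomp: "(x::complex^'n) = (\<Sum>j\<in>UNIV. x$j *s axis j 1)"
  by (simp add: vec_eq_iff sum_component axis_def if_distrib cong: if_cong)

lemma col_space_sub: "B *v x \<in> col_space B"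
  by (simp add: col_space_def)

lemma col_space_mult: "col_space (B ** C) = (\<lambda>x. B *v x) ` col_space C"
  by (auto simp: col_space_def matrix_vector_mul_assoc[symmetric] image_iff)

lemma col_space_add: "u \<in> col_space B \<Longrightarrow> v \<in> col_space B \<Longrightarrow> u + v \<in> col_space B"
  by (auto simp: col_space_def matrix_vector_right_distrib[symmetric])
lemma col_space_diff: "u \<in> col_space B \<Longrightarrow> v \<in> col_space B \<Longrightarrow> u - v \<in> col_space B"
  by (auto simp: col_space_def matrix_vector_mult_diff_distrib[symmetric])
lemma col_space_scale: "u \<in> col_space B \<Longrightarrow> c *s u \<in> col_space B"
  by (auto simp: col_space_def mv_scale[symmetric])
lemma col_space_0: "0 \<in> col_space B"
  by (metis col_space_sub matrix_vector_mult_0_right)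
lemma col_space_sum: "(\<And>j. j \<in> A \<Longrightarrow> f j \<in> col_space B) \<Longrightarrow> (\<Sum>j\<in>A. f j) \<in> col_space B"
  by (induction A rule: infinite_finite_induct) (auto simp: col_space_0 col_space_add)

lemma scaleR_cs: "(c::real) *\<^sub>R (u::complex^'n) = complex_of_real c *s u"
  apply (rule vec_eq_iff[THEN iffD2, rule_format])
  apply (simp only: vector_scaleR_component vector_scalar_mult_def vec_lambda_beta)
  by (simp add: scaleR_conv_of_real)

lemma col_space_subspace: "subspace (col_space B)"
  unfolding subspace_def
proof (intro conjI ballI allI)
  show "0 \<in> col_space B" by (rule col_space_0)
next
  fix x y assume "x \<in> col_space B" "y \<in> col_space B"
  then show "x + y \<in> col_space B" by (rule col_space_add)
next
  fix c x assume "x \<in> col_space B"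
  then show "c *\<^sub>R x \<in> col_space B" unfolding scaleR_cs by (rule col_space_scale)
qed

lemma mkm_col: "(\<And>j. g j \<in> col_space B) \<Longrightarrow> mkm g *v x \<in> col_space B"
  by (simp add: mkm_mv col_space_sum col_space_scale)

lemma mkm_axis: "mkm g *v axis j 1 = g j"
  by (simp add: mkm_def matrix_vector_mult_def vec_eq_iff axis_def if_distrib cong: if_cong)


lemma cdot_zero_r[simp]: "cdot x 0 = 0"
  by (simp add: cdot_def)
lemma cdot_diff_r: "cdot x (y - z) = cdot x y - cdot x z"
  by (simp add: cdot_def right_diff_distrib sum_subtractf)
lemma cdot_add_r: "cdot x (y + z) = cdot x y + cdot x z"
  by (simp add: cdot_def distrib_left sum.distrib)

lemma scale_diff: "c *s (x - y) = c *s x - c *s (y::complex^'n)"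
  by (simp add: vec_eq_iff right_diff_distrib)

lemma cols_eq: "(\<And>j. M *v axis j 1 = N *v axis j (1::complex)) \<Longrightarrow> M = N"
proof -
  assume h: "\<And>j. M *v axis j 1 = N *v axis j (1::complex)"
  show "M = N"
  proof (subst matrix_eq, intro allI)
    fix x
    have "M *v x = (\<Sum>j\<in>UNIV. x$j *s (M *v axis j 1))"
      by (subst vec_decomp) (simp add: mv_sum mv_scale)
    also have "\<dots> = (\<Sum>j\<in>UNIV. x$j *s (N *v axis j 1))" using h by simp
    also have "\<dots> = N *v x"
      by (subst (2) vec_decomp) (simp add: mv_sum mv_scale)
    finally show "M *v x = N *v x" .
  qed
qed

lemma orth_real_to_complex:
  assumes "\<And>w. w \<in> col_space C \<Longrightarrow> orthogonal z w" "s \<in> col_space C"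
  shows "cdot z s = 0"
proof -
  have "inner z s = 0" using assms by (simp add: orthogonal_def)
  then have 1: "Re (cdot z s) = 0" by (simp add: inner_cdot)
  have "inner z (\<i> *s s) = 0" using assms(1)[OF col_space_scale[OF assms(2)]] by (simp add: orthogonal_def)
  then have "Re (cdot z (\<i> *s s)) = 0" by (simp add: inner_cdot)
  then have 2: "Im (cdot z s) = 0" by (simp add: cdot_scale_r)
  show ?thesis using 1 2 by (simp add: complex_eq_iff)
qed

lemma proj_exists:
  fixes C :: "complex^'k^'n"
  shows "\<exists>P::complex^'n^'n. (\<forall>x. P *v x \<in> col_space C) \<and>
           (\<forall>x s. s \<in> col_space C \<longrightarrow> cdot (x - P *v x) s = 0)"
proof -
  have sp: "span (col_space C) = col_space C"
    by (simp add: col_space_subspace span_eq_iff)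
  have "\<forall>j. \<exists>y. y \<in> col_space C \<and> (\<forall>s\<in>col_space C. cdot (axis j 1 - y) s = 0)"
  proof
    fix j :: 'n
    obtain y z where y: "y \<in> span (col_space C)"
      and z: "\<And>w. w \<in> span (col_space C) \<Longrightarrow> orthogonal z w"
      and e: "axis j 1 = y + z"
      using orthogonal_subspace_decomp_exists[of "col_space C" "axis j 1"] by blast
    have "\<forall>s\<in>col_space C. cdot (axis j 1 - y) s = 0"
      using orth_real_to_complex[of C z] z e unfolding sp by simp
    then show "\<exists>y. y \<in> col_space C \<and> (\<forall>s\<in>col_space C. cdot (axis j 1 - y) s = 0)"
      using y sp by blast
  qed
  then obtain p where p: "\<And>j. p j \<in> col_space C"
    "\<And>j s. s \<in> col_space C \<Longrightarrow> cdot (axis j 1 - p j) s = 0" by metis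
  have "\<forall>x. mkm p *v x \<in> col_space C" using p(1) mkm_col by blast
  moreover have "cdot (x - mkm p *v x) s = 0" if "s \<in> col_space C" for x s
  proof -
    have "x - mkm p *v x = (\<Sum>j\<in>UNIV. x$j *s (axis j 1 - p j))"
      by (subst (1) vec_decomp) (simp add: mkm_mv scale_diff sum_subtractf)
    moreover have "cdot (axis j 1) s = cdot (p j) s" for j
      using p(2)[OF that, of j] by (simp add: cdot_diff_l)
    ultimately show ?thesis by (simp add: cdot_sum_l cdot_scale_l cdot_diff_l)
  qed
  ultimately show ?thesis by blast
qed

definition is_proj where
  "is_proj P S \<longleftrightarrow> (\<forall>x. P *v x \<in> S) \<and> (\<forall>x s. s \<in> S \<longrightarrow> cdot (x - P *v x) s = 0)"

lemma proj_ex: "\<exists>P. is_proj P (col_space (C::complex^'k^'n))"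
  using proj_exists[of C] unfolding is_proj_def by blast

lemma cdot_eq0_imp: "(\<And>s. s \<in> S \<Longrightarrow> cdot d s = 0) \<Longrightarrow> d \<in> S \<Longrightarrow> d = 0"
  using cdot_self_eq0 by blast

lemma proj_unique:
  assumes "is_proj P (col_space C)" "a \<in> col_space C" "\<And>s. s \<in> col_space C \<Longrightarrow> cdot (v - a) s = 0"
  shows "a = P *v v"
proof -
  have m: "P *v v \<in> col_space C" and o: "\<And>s. s \<in> col_space C \<Longrightarrow> cdot (v - P *v v) s = 0"
    using assms(1) by (auto simp: is_proj_def)
  have "a - P *v v = (v - P *v v) - (v - a)" by simp
  then have "cdot (a - P *v v) s = 0" if "s \<in> col_space C" for s
    using o[OF that] assms(3)[OF that] by (simp add: cdot_diff_l)
  moreover have "a - P *v v \<in> col_space C" using assms(2) m col_space_diff by blast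
  ultimately show ?thesis using cdot_eq0_imp[of "col_space C"] by fastforce
qed

lemma proj_fix: "is_proj P (col_space C) \<Longrightarrow> s \<in> col_space C \<Longrightarrow> P *v s = s"
  using proj_unique[of P C s s] by simp

lemma proj_herm:
  assumes "is_proj P (col_space C)"
  shows "ct P = P"
proof -
  have m: "\<And>v. P *v v \<in> col_space C" and o: "\<And>v s. s \<in> col_space C \<Longrightarrow> cdot (v - P *v v) s = 0"
    using assms by (auto simp: is_proj_def)
  have sym: "cdot (P *v x) y = cdot x (P *v y)" for x y
  proof -
    have "cdot (P *v x) y = cdot (P *v x) (P *v y) + cdot (P *v x) (y - P *v y)"
      by (simp add: cdot_diff_r)
    also have "cdot (P *v x) (y - P *v y) = 0"
      using o[OF m[of x], of y] by (subst cdot_cnj) simp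
    also have "cdot x (P *v y) = cdot (P *v x) (P *v y) + cdot (x - P *v x) (P *v y)"
      by (simp add: cdot_diff_l)
    moreover have "cdot (x - P *v x) (P *v y) = 0" using o m by blast
    ultimately show ?thesis by simp
  qed
  show ?thesis
  proof (subst matrix_eq, intro allI)
    fix y
    have "cdot x (ct P *v y - P *v y) = 0" for x
      using sym[of x y] by (simp add: cdot_diff_r cdot_mv[symmetric])
    then show "ct P *v y = P *v y"
      using cdot_self_eq0[of "ct P *v y - P *v y"] cdot_cnj by (metis right_minus_eq complex_cnj_zero_iff)
  qed
qed

lemma ker_lemma: "(\<And>s. s \<in> col_space (ct B) \<Longrightarrow> cdot v s = 0) \<Longrightarrow> B *v v = 0"
proof -
  assume h: "\<And>s. s \<in> col_space (ct B) \<Longrightarrow> cdot v s = 0"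
  have "cdot (B *v v) (B *v v) = cdot v (ct B *v (B *v v))" by (rule cdot_mv)
  also have "\<dots> = 0" using h col_space_sub by blast
  finally show ?thesis using cdot_self_eq0 by blast
qed

lemma inj_lemma: "u \<in> col_space (ct B) \<Longrightarrow> B *v u = 0 \<Longrightarrow> u = 0"
proof -
  assume u: "u \<in> col_space (ct B)" and b: "B *v u = 0"
  obtain w where w: "u = ct B *v w" using u by (auto simp: col_space_def)
  have "cdot u u = cdot w (ct (ct B) *v u)" unfolding w[symmetric] using cdot_mv[of "ct B" w u] w by simp
  also have "\<dots> = 0" using b by simp
  finally show ?thesis using cdot_self_eq0 by blast
qed

lemma inj_lemma2: "u \<in> col_space (ct B) \<Longrightarrow> v \<in> col_space (ct B) \<Longrightarrow> B *v u = B *v v \<Longrightarrow> u = v"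
  using inj_lemma[of "u - v" B] col_space_diff[of u "ct B" v] by (simp add: matrix_vector_mult_diff_distrib)


lemma mp_exists:
  fixes B :: "complex^'n^'n"
  shows "\<exists>X. B ** X ** B = B \<and> X ** B ** X = X \<and> ct (B ** X) = B ** X \<and> ct (X ** B) = X ** B"
proof -
  obtain P where P: "is_proj P (col_space B)" using proj_ex by blast
  obtain Q where Q: "is_proj Q (col_space (ct B))" using proj_ex by blast
  have BQ: "B *v (Q *v y) = B *v y" for y
  proof -
    have "B *v (y - Q *v y) = 0"
      by (rule ker_lemma) (use Q in \<open>auto simp: is_proj_def\<close>)
    then show ?thesis by (simp add: matrix_vector_mult_diff_distrib)
  qed
  have Qm: "Q *v y \<in> col_space (ct B)" for y using Q by (simp add: is_proj_def)
  have "\<forall>j. \<exists>g. g \<in> col_space (ct B) \<and> B *v g = P *v axis j 1"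
  proof
    fix j
    have "P *v axis j 1 \<in> col_space B" using P by (simp add: is_proj_def)
    then obtain y where "P *v axis j 1 = B *v y" by (auto simp: col_space_def)
    then show "\<exists>g. g \<in> col_space (ct B) \<and> B *v g = P *v axis j 1"
      using BQ Qm by metis
  qed
  then obtain g where g: "\<And>j. g j \<in> col_space (ct B)" "\<And>j. B *v g j = P *v axis j 1" by metis
  define X where "X = mkm g"
  have Xm: "X *v x \<in> col_space (ct B)" for x unfolding X_def using g(1) mkm_col by blast
  have BX: "B ** X = P"
    by (rule cols_eq) (simp add: matrix_vector_mul_assoc[symmetric] X_def mkm_axis g(2))
  have 1: "B ** X ** B = B"
    unfolding BX by (subst matrix_eq) (simp add: matrix_vector_mul_assoc[symmetric] proj_fix[OF P] col_space_sub)
  have XP: "X ** P = X"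
  proof (rule cols_eq)
    fix j
    have BXv: "B *v (X *v v) = P *v v" for v
      using BX by (simp add: matrix_vector_mul_assoc)
    have "B *v (X *v (P *v axis j 1)) = P *v (P *v axis j 1)"
      by (rule BXv)
    also have "\<dots> = P *v axis j 1" using P proj_fix is_proj_def by metis
    also have "\<dots> = B *v (X *v axis j 1)" by (rule BXv[symmetric])
    finally show "(X ** P) *v axis j 1 = X *v axis j 1"
      using inj_lemma2[OF Xm Xm] by (simp add: matrix_vector_mul_assoc[symmetric])
  qed
  have 2: "X ** B ** X = X" by (simp add: matrix_mul_assoc[symmetric] BX XP)
  have 3: "ct (B ** X) = B ** X" using BX proj_herm[OF P] by simp
  have XB: "X ** B = Q"
  proof (subst matrix_eq, intro allI)
    fix x
    have "B *v (X *v (B *v x)) = B *v x"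
      using 1 by (simp add: matrix_vector_mul_assoc matrix_mul_assoc)
    also have "\<dots> = B *v (Q *v x)" using BQ by simp
    finally show "(X ** B) *v x = Q *v x"
      using inj_lemma2[OF Xm Qm] by (simp add: matrix_vector_mul_assoc[symmetric])
  qed
  have 4: "ct (X ** B) = X ** B" using XB proj_herm[OF Q] by simp
  show ?thesis using 1 2 3 4 by blast
qed

lemma mp_unique:
  fixes A X Y :: "complex^'n^'n"
  assumes x: "A ** X ** A = A" "X ** A ** X = X" "ct (A ** X) = A ** X" "ct (X ** A) = X ** A"
  and y: "A ** Y ** A = A" "Y ** A ** Y = Y" "ct (A ** Y) = A ** Y" "ct (Y ** A) = Y ** A"
  shows "X = Y"
proof -
  have "X = X ** (A ** X)" using x(2) by (simp add: matrix_mul_assoc)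
  also have "\<dots> = X ** ct X ** ct A" using x(3) by (metis ct_mult matrix_mul_assoc)
  also have "ct A = ct (A ** Y ** A)" using y(1) by simp
  also have "\<dots> = ct A ** ct Y ** ct A" by (simp add: ct_mult matrix_mul_assoc)
  also have "X ** ct X ** (ct A ** ct Y ** ct A) = (X ** ct (A ** X)) ** ct (A ** Y)"
    by (simp add: ct_mult matrix_mul_assoc)
  also have "\<dots> = X ** A ** X ** A ** Y" using x(3) y(3) by (simp add: matrix_mul_assoc)
  also have "\<dots> = X ** A ** Y" using x(2) by simp
  finally have ex: "X = X ** A ** Y" .
  have "Y = (Y ** A) ** Y" using y(2) by simp
  also have "\<dots> = ct A ** ct Y ** Y" using y(4) by (metis ct_mult)
  also have "ct A = ct (A ** X ** A)" using x(1) by simp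
  also have "\<dots> = ct A ** ct X ** ct A" by (simp add: ct_mult matrix_mul_assoc)
  also have "ct A ** ct X ** ct A ** ct Y ** Y = ct (X ** A) ** (ct (Y ** A) ** Y)"
    by (simp add: ct_mult matrix_mul_assoc)
  also have "\<dots> = X ** A ** (Y ** A ** Y)" using x(4) y(4) by (simp add: matrix_mul_assoc)
  also have "\<dots> = X ** A ** Y" using y(2) by simp
  finally show ?thesis using ex by simp
qed

lemma mp_props:
  fixes B :: "complex^'n^'n"
  shows "B ** mp_inverse B ** B = B"
proof -
  have "\<exists>!X. B ** X ** B = B \<and> X ** B ** X = X \<and> ct (B ** X) = B ** X \<and> ct (X ** B) = X ** B"
    using mp_exists[of B] mp_unique[of B] by blast
  from theI'[OF this] show ?thesis unfolding mp_inverse_def by blast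
qed



lemma mat_pow_Suc': "mat_pow A (Suc k) = mat_pow A k ** A"
proof (induction k)
  case 0 then show ?case by simp
next
  case (Suc k)
  have "mat_pow A (Suc (Suc k)) = A ** (mat_pow A k ** A)" using Suc by simp
  also have "\<dots> = mat_pow A (Suc k) ** A" by (simp add: matrix_mul_assoc)
  finally show ?case .
qed

lemma col_space_mult_sub: "col_space (B ** C) \<subseteq> col_space B"
  by (auto simp: col_space_def matrix_vector_mul_assoc[symmetric])

lemma cs_pow_Suc_sub: "col_space (mat_pow A (Suc k)) \<subseteq> col_space (mat_pow A k)"
  unfolding mat_pow_Suc' by (rule col_space_mult_sub)

lemma cs_pow_mono: "k \<le> j \<Longrightarrow> col_space (mat_pow A j) \<subseteq> col_space (mat_pow A k)"
proof (induction j rule: dec_induct)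
  case base then show ?case by simp
next
  case (step j) then show ?case using cs_pow_Suc_sub by blast
qed

lemma span_cs: "span (col_space B) = col_space B"
  by (simp add: col_space_subspace span_eq_iff)

lemma index_exists: "\<exists>k. col_space (mat_pow A k) = col_space (mat_pow A (Suc k))"
proof (rule ccontr)
  assume "\<not> ?thesis"
  then have ne: "col_space (mat_pow A (Suc k)) \<noteq> col_space (mat_pow A k)" for k by metis
  have lt: "dim (col_space (mat_pow A (Suc k))) < dim (col_space (mat_pow A k))" for k
    using dim_psubset[of "col_space (mat_pow A (Suc k))" "col_space (mat_pow A k)"]
      cs_pow_Suc_sub[of A k] ne[of k] unfolding span_cs by blast
  have le: "dim (col_space (mat_pow A k)) + k \<le> dim (col_space (mat_pow A 0))" for k
  proof (induction k)
    case 0 then show ?case by simp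
  next
    case (Suc k) then show ?case using lt[of k] by simp
  qed
  have "dim (col_space (mat_pow A 0)) \<le> DIM(complex^'a)" by (rule dim_subset_UNIV)
  then show False using le[of "Suc (DIM(complex^'a))"] by simp
qed

lemma index_prop: "col_space (mat_pow A (mat_index A)) = col_space (mat_pow A (Suc (mat_index A)))"
  unfolding mat_index_def by (rule LeastI_ex[OF index_exists])

lemma cs_pow_Suc: "col_space (mat_pow A (Suc k)) = (\<lambda>x. A *v x) ` col_space (mat_pow A k)"
  by (simp add: col_space_mult)

lemma index_stable: "mat_index A \<le> j \<Longrightarrow> col_space (mat_pow A j) = col_space (mat_pow A (mat_index A))"
proof (induction j rule: dec_induct)
  case base then show ?case by simp
next
  case (step i)
  have "col_space (mat_pow A (Suc i)) = (\<lambda>x. A *v x) ` col_space (mat_pow A i)"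
    by (rule cs_pow_Suc)
  also have "\<dots> = (\<lambda>x. A *v x) ` col_space (mat_pow A (mat_index A))"
    using step.IH by simp
  also have "\<dots> = col_space (mat_pow A (mat_index A))"
    using index_prop[of A] cs_pow_Suc[of A "mat_index A"] by simp
  finally show ?case .
qed

lemma image_eq_inj:
  fixes f :: "'a::euclidean_space \<Rightarrow> 'a"
  assumes lf: "linear f" and S: "subspace S" and fS: "f ` S = S"
  shows "inj_on f S"
proof -
  obtain B where B: "B \<subseteq> S" "independent B" "S \<subseteq> span B" "card B = dim S"
    using basis_exists[of S] by blast
  have fin: "finite B" using B(2) independent_bound by blast
  have spB: "span B = S" using B S by (simp add: span_subspace)
  have spfB: "span (f ` B) = S" using spB fS lf by (simp add: span_linear_image)
  have "dim S \<le> card (f ` B)" using dim_le_card[of S "f ` B"] spfB fin by auto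
  moreover have "card (f ` B) \<le> card B" using fin by (rule card_image_le)
  ultimately have cfB: "card (f ` B) = card B" using B(4) by simp
  then have injB: "inj_on f B" using fin by (simp add: eq_card_imp_inj_on)
  have "independent (f ` B)"
    using card_eq_dim[of "f ` B" S] cfB B fS spfB fin by auto
  then have "inj_on f (span B)"
    using injB lf linear_inj_on_span_iff_independent_image by blast
  then show ?thesis using spB by simp
qed



lemma AS: "(\<lambda>x. A *v x) ` col_space (mat_pow A (mat_index A)) = col_space (mat_pow A (mat_index A))"
  using index_prop[of A] cs_pow_Suc[of A "mat_index A"] by simp

lemma injA:
  assumes "u \<in> col_space (mat_pow A (mat_index A))" "v \<in> col_space (mat_pow A (mat_index A))"
    "A *v u = A *v v"
  shows "u = v"
proof -
  have "inj_on (\<lambda>x. A *v x) (col_space (mat_pow A (mat_index A)))"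
    by (rule image_eq_inj[OF matrix_vector_mul_linear col_space_subspace AS])
  then show ?thesis using assms by (auto simp: inj_on_def)
qed

lemma core_props:
  fixes A Y P :: "complex^'n^'n"
  defines "S \<equiv> col_space (mat_pow A (mat_index A))"
  assumes y: "Y ** A ** Y = Y" "col_space Y = col_space (ct Y)" "col_space (ct Y) = S"
    and P: "is_proj P S"
  shows "A ** Y = P" "\<And>v. Y *v v \<in> S"
proof -
  show Ym: "\<And>v. Y *v v \<in> S" using y(2,3) col_space_sub by blast
  show "A ** Y = P"
  proof (subst matrix_eq, intro allI)
    fix v
    have "A *v (Y *v v) \<in> S" using Ym AS unfolding S_def by blast
    moreover have "cdot (v - A *v (Y *v v)) s = 0" if "s \<in> S" for s
    proof -
      have "s \<in> col_space (ct Y)" using that y(3) by simp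
      then obtain w where w: "s = ct Y *v w" by (auto simp: col_space_def)
      have "cdot (v - A *v (Y *v v)) s = cdot (Y *v (v - A *v (Y *v v))) w"
        unfolding w by (rule cdot_mv[symmetric])
      also have "Y *v (v - A *v (Y *v v)) = 0"
        using y(1) by (simp add: matrix_vector_mult_diff_distrib matrix_vector_mul_assoc matrix_mul_assoc)
      finally show ?thesis by simp
    qed
    ultimately show "(A ** Y) *v v = P *v v"
      using proj_unique[OF P[unfolded S_def]] unfolding S_def by (simp add: matrix_vector_mul_assoc)
  qed
qed

lemma core_exists:
  fixes A :: "complex^'n^'n"
  defines "S \<equiv> col_space (mat_pow A (mat_index A))"
  shows "\<exists>X. X ** A ** X = X \<and> col_space X = col_space (ct X) \<and> col_space (ct X) = S"
proof -
  obtain P where P: "is_proj P S" unfolding S_def using proj_ex by blast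
  have AS': "(\<lambda>x. A *v x) ` S = S" unfolding S_def by (rule AS)
  have inj: "\<And>u v. u \<in> S \<Longrightarrow> v \<in> S \<Longrightarrow> A *v u = A *v v \<Longrightarrow> u = v"
    unfolding S_def by (rule injA)
  have Pfix: "\<And>s. s \<in> S \<Longrightarrow> P *v s = s" using P proj_fix unfolding S_def by blast
  have Pm: "\<And>v. P *v v \<in> S" using P by (simp add: is_proj_def)
  have "\<forall>j. \<exists>g. g \<in> S \<and> A *v g = P *v axis j 1"
  proof
    fix j
    have "P *v axis j 1 \<in> (\<lambda>x. A *v x) ` S" using Pm AS' by simp
    then show "\<exists>g. g \<in> S \<and> A *v g = P *v axis j 1" by force
  qed
  then obtain g where g: "\<And>j. g j \<in> S" "\<And>j. A *v g j = P *v axis j 1" by metis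
  define X where "X = mkm g"
  have Xm: "X *v v \<in> S" for v unfolding X_def S_def using g(1) mkm_col unfolding S_def by blast
  have AX: "A ** X = P"
    by (rule cols_eq) (simp add: matrix_vector_mul_assoc[symmetric] X_def mkm_axis g(2))
  have AXv: "A *v (X *v v) = P *v v" for v using AX by (simp add: matrix_vector_mul_assoc)
  have XP: "X ** P = X"
  proof (rule cols_eq)
    fix j
    have "A *v (X *v (P *v axis j 1)) = A *v (X *v axis j 1)"
      unfolding AXv using Pfix Pm by simp
    then show "(X ** P) *v axis j 1 = X *v axis j 1"
      using inj[OF Xm Xm] by (simp add: matrix_vector_mul_assoc[symmetric])
  qed
  have XAs: "X *v (A *v s) = s" if "s \<in> S" for s
  proof -
    have "A *v s \<in> S" using AS' that by blast
    then have "A *v (X *v (A *v s)) = A *v s" using AXv Pfix by simp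
    then show ?thesis using inj[OF Xm that] by simp
  qed
  have 1: "X ** A ** X = X" by (simp add: matrix_mul_assoc[symmetric] AX XP)
  have RX: "col_space X = S"
  proof
    show "col_space X \<subseteq> S" using Xm by (auto simp: col_space_def)
    show "S \<subseteq> col_space X"
    proof
      fix s assume "s \<in> S"
      then have "s = X *v (A *v s)" using XAs by simp
      then show "s \<in> col_space X" by (metis col_space_sub)
    qed
  qed
  have ctX: "ct X = P ** ct X"
  proof -
    have "ct X = ct (X ** P)" using XP by simp
    also have "\<dots> = ct P ** ct X" by (rule ct_mult)
    also have "ct P = P" using proj_herm P unfolding S_def by blast
    finally show ?thesis .
  qed
  have RXc: "col_space (ct X) = S"
  proof
    show "col_space (ct X) \<subseteq> S"
    proof
      fix u assume "u \<in> col_space (ct X)"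
      then obtain w where "u = ct X *v w" by (auto simp: col_space_def)
      then have "u = P *v (ct X *v w)" using ctX by (metis matrix_vector_mul_assoc)
      then show "u \<in> S" using Pm by simp
    qed
    note sub = this
    show "S \<subseteq> col_space (ct X)"
    proof
      fix s assume s: "s \<in> S"
      obtain Q where Q: "is_proj Q (col_space (ct X))" using proj_ex by blast
      define t where "t = s - Q *v s"
      have Qm: "Q *v s \<in> col_space (ct X)" using Q by (simp add: is_proj_def)
      have tS: "t \<in> S" unfolding t_def S_def
        using col_space_diff s Qm sub unfolding S_def by blast
      have "X *v t = 0"
        by (rule ker_lemma) (use Q in \<open>auto simp: is_proj_def t_def\<close>)
      then have "t = 0" using AXv[of t] Pfix[OF tS] by simp
      then show "s \<in> col_space (ct X)" using Qm unfolding t_def by simp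
    qed
  qed
  show ?thesis using 1 RX RXc by blast
qed

lemma core_EP_props:
  fixes A :: "complex^'n^'n"
  defines "S \<equiv> col_space (mat_pow A (mat_index A))"
  shows "core_EP A ** A ** core_EP A = core_EP A \<and> col_space (core_EP A) = col_space (ct (core_EP A))
     \<and> col_space (ct (core_EP A)) = S"
proof -
  obtain P where P: "is_proj P S" unfolding S_def using proj_ex by blast
  have "\<exists>!X. X ** A ** X = X \<and> col_space X = col_space (ct X) \<and> col_space (ct X) = S"
  proof (rule ex_ex1I)
    show "\<exists>X. X ** A ** X = X \<and> col_space X = col_space (ct X) \<and> col_space (ct X) = S"
      unfolding S_def by (rule core_exists)
  next
    fix X Y
    assume x: "X ** A ** X = X \<and> col_space X = col_space (ct X) \<and> col_space (ct X) = S"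
      and y: "Y ** A ** Y = Y \<and> col_space Y = col_space (ct Y) \<and> col_space (ct Y) = S"
    have ax: "A ** X = P" "\<And>v. X *v v \<in> S" using core_props[of X A P] x P unfolding S_def by auto
    have ay: "A ** Y = P" "\<And>v. Y *v v \<in> S" using core_props[of Y A P] y P unfolding S_def by auto
    show "X = Y"
    proof (subst matrix_eq, intro allI)
      fix v
      have "A *v (X *v v) = A *v (Y *v v)" using ax(1) ay(1) by (simp add: matrix_vector_mul_assoc)
      then show "X *v v = Y *v v" using injA[OF ax(2)[unfolded S_def] ay(2)[unfolded S_def]] by simp
    qed
  qed
  from theI'[OF this] show ?thesis unfolding core_EP_def S_def by blast
qed



theorem theorem4p14:
  fixes A :: "complex^'n^'n" and m :: nat
  assumes "m \<ge> 1"
  shows "A ** weak_core_m m A ** A = A \<longleftrightarrow> mat_index A \<le> 1"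
proof -
  define S where "S = col_space (mat_pow A (mat_index A))"
  define E where "E = core_EP A"
  define M where "M = mp_inverse (mat_pow A m)"
  obtain m' where m': "m = Suc m'" using assms by (cases m) auto
  obtain P where P: "is_proj P S" unfolding S_def using proj_ex by blast
  have Ep: "E ** A ** E = E" "col_space E = col_space (ct E)" "col_space (ct E) = S"
    using core_EP_props[of A] unfolding E_def S_def by auto
  have AE: "A ** E = P" and Em: "\<And>v. E *v v \<in> S"
    using core_props[of E A P] Ep P unfolding S_def by auto
  have AEv: "A *v (E *v v) = P *v v" for v using AE by (simp add: matrix_vector_mul_assoc)
  have Pfix: "\<And>s. s \<in> S \<Longrightarrow> P *v s = s" using P proj_fix unfolding S_def by blast
  have inj: "\<And>u v. u \<in> S \<Longrightarrow> v \<in> S \<Longrightarrow> A *v u = A *v v \<Longrightarrow> u = v"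
    unfolding S_def by (rule injA)
  have AS': "(\<lambda>x. A *v x) ` S = S" unfolding S_def by (rule AS)
  have EAs: "E *v (A *v s) = s" if "s \<in> S" for s
  proof -
    have "A *v s \<in> S" using AS' that by blast
    then have "A *v (E *v (A *v s)) = A *v s" using AEv Pfix by simp
    then show ?thesis using inj[OF Em that] by simp
  qed
  have Epm: "mat_pow E m *v y = E *v (mat_pow E m' *v y)" for y
    unfolding m' by (simp add: matrix_vector_mul_assoc)
  have key: "(A ** weak_core_m m A ** A) *v x =
      mat_pow E m *v (mat_pow A m *v (mat_pow A m *v (M *v (A *v x))))" for x
  proof -
    have "(A ** weak_core_m m A ** A) *v x =
      A *v (E *v (mat_pow E m *v (mat_pow A m *v (mat_pow A m *v (M *v (A *v x))))))"
      unfolding weak_core_m_def weak_group_m_def M_def E_def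
      by (simp add: matrix_vector_mul_assoc[symmetric])
    also have "\<dots> = mat_pow E m *v (mat_pow A m *v (mat_pow A m *v (M *v (A *v x))))"
      unfolding AEv Epm using Pfix Em by simp
    finally show ?thesis .
  qed
  have pow1: "mat_pow A 1 = A" by simp
  show ?thesis
  proof
    assume h: "A ** weak_core_m m A ** A = A"
    have sub: "col_space A \<subseteq> S"
    proof
      fix u assume "u \<in> col_space A"
      then obtain x where "u = A *v x" by (auto simp: col_space_def)
      then have "u = (A ** weak_core_m m A ** A) *v x" using h by simp
      then have "u = E *v (mat_pow E m' *v (mat_pow A m *v (mat_pow A m *v (M *v (A *v x)))))"
        using key Epm by simp
      then show "u \<in> S" using Em by simp
    qed
    show "mat_index A \<le> 1"
    proof (rule ccontr)
      assume "\<not> mat_index A \<le> 1"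
      then have "2 \<le> mat_index A" by simp
      then have "S \<subseteq> col_space (mat_pow A 2)" unfolding S_def by (rule cs_pow_mono)
      moreover have "col_space (mat_pow A 2) \<subseteq> col_space (mat_pow A 1)"
        using cs_pow_Suc_sub[of A 1] by (simp add: numeral_2_eq_2)
      ultimately have "col_space (mat_pow A 1) = col_space (mat_pow A (Suc 1))"
        using sub pow1 by (simp add: numeral_2_eq_2)
      then have "mat_index A \<le> 1" unfolding mat_index_def by (rule Least_le)
      then show False using \<open>2 \<le> mat_index A\<close> by simp
    qed
  next
    assume k: "mat_index A \<le> 1"
    have csj: "col_space (mat_pow A j) = S" if "1 \<le> j" for j
      unfolding S_def using index_stable[of A j] k that by simp
    have csA: "col_space A = S" using csj[of 1] by simp
    have mpA: "mat_pow A m ** M ** mat_pow A m = mat_pow A m" unfolding M_def by (rule mp_props)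
    have PmA: "mat_pow A m *v (M *v (A *v x)) = A *v x" for x
    proof -
      have "A *v x \<in> col_space (mat_pow A m)" using csA csj[OF assms] col_space_sub by blast
      then obtain y where y: "A *v x = mat_pow A m *v y" by (auto simp: col_space_def)
      have "mat_pow A m *v (M *v (mat_pow A m *v y)) = mat_pow A m *v y"
        using mpA by (metis matrix_vector_mul_assoc)
      then show ?thesis using y by simp
    qed
    have ind: "mat_pow E i *v (mat_pow A i *v (A *v x)) = A *v x" for i x
    proof (induction i)
      case 0 then show ?case by simp
    next
      case (Suc i)
      have mem: "mat_pow A i *v (A *v x) \<in> S"
      proof -
        have "mat_pow A i *v (A *v x) = mat_pow A (Suc i) *v x"
          by (simp add: mat_pow_Suc' matrix_vector_mul_assoc del: mat_pow.simps)
        then show ?thesis using csj[of "Suc i"] col_space_sub by (metis le_add1 plus_1_eq_Suc)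
      qed
      have "mat_pow E (Suc i) *v (mat_pow A (Suc i) *v (A *v x))
          = mat_pow E i *v (E *v (A *v (mat_pow A i *v (A *v x))))"
        by (simp only: mat_pow_Suc'[of E] mat_pow.simps(2)[of A] matrix_vector_mul_assoc matrix_mul_assoc)
      also have "\<dots> = mat_pow E i *v (mat_pow A i *v (A *v x))" using EAs[OF mem] by simp
      finally show ?case using Suc by simp
    qed
    show "A ** weak_core_m m A ** A = A"
    proof (subst matrix_eq, intro allI)
      fix x
      show "(A ** weak_core_m m A ** A) *v x = A *v x"
        unfolding key PmA by (rule ind)
    qed
  qed
qed


end
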